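(* Let $F^{(a)}(x,y)$ and $F^{(b)}(x,y)$ be homogeneous polynomials of degree $2$ in two variables with nonnegative integer coefficients, and define $a_0=b_0=1$, $a_n=F^{(a)}(a_{n-1},b_{n-1})$, $b_n=F^{(b)}(a_{n-1},b_{n-1})$ for $n\ge 1$. If $a_1=b_1$, then $a_n=b_n$ for all $n\in\mathbb{N}$.
   Context: This is an SNRE of degree $(2,2)$; note that with the convention $a_0=b_0=1$, $a_1$ and $b_1$ equal the sums of the coefficients of $F^{(a)}$ and $F^{(b)}$ respectively. *)

theory Defs
  imports Main
begin

definition hom2 :: "nat \<times> nat \<times> nat \<Rightarrow> nat \<Rightarrow> nat \<Rightarrow> nat" where
  "hom2 c x y = fst c * x^2 + fst (snd c) * x * y + snd (snd c) * y^2"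

fun snre :: "nat \<times> nat \<times> nat \<Rightarrow> nat \<times> nat \<times> nat \<Rightarrow> nat \<Rightarrow> nat \<times> nat" where
  "snre ca cb 0 = (1, 1)"
| "snre ca cb (Suc n) =
     (let (a, b) = snre ca cb n in (hom2 ca a b, hom2 cb a b))"

end

theory Submission
  imports Defs
begin

lemma hom2_diag: "hom2 c t t = (fst c + fst (snd c) + snd (snd c)) * t^2"
  by (simp add: hom2_def power2_eq_square algebra_simps)

theorem proposition1:
  fixes ca cb :: "nat \<times> nat \<times> nat"
  assumes "fst (snre ca cb 1) = snd (snre ca cb 1)"
  shows "\<forall>n. fst (snre ca cb n) = snd (snre ca cb n)"
proof
  have s: "fst ca + fst (snd ca) + snd (snd ca) = fst cb + fst (snd cb) + snd (snd cb)"
    using assms by (simp add: hom2_diag)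
  fix n show "fst (snre ca cb n) = snd (snre ca cb n)"
  proof (induction n)
    case 0 then show ?case by simp
  next
    case (Suc n)
    obtain a b where ab: "snre ca cb n = (a, b)" by fastforce
    with Suc have "a = b" by simp
    then show ?case using ab s by (simp add: hom2_diag)
  qed
qed

end
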